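(* Let $\varrho\in C^2(\mathbb{C};\mathbb{C})$ be not $\mathbb{R}$-affine, let $K\subseteq\mathbb{C}$ be compact and $\varepsilon>0$. Then there exist $\mathbb{C}$-affine maps $\phi:\mathbb{C}\to\mathbb{C}^4$ and $\psi:\mathbb{C}^4\to\mathbb{C}$ such that at least one of the three inequalities $$\sup_{z\in K}|(\psi\circ\varrho^{\times4}\circ\phi)(z)-z\overline{z}|<\varepsilon,\quad \sup_{z\in K}|(\psi\circ\varrho^{\times4}\circ\phi)(z)-z^2|<\varepsilon,\quad \sup_{z\in K}|(\psi\circ\varrho^{\times4}\circ\phi)(z)-\overline{z}^2|<\varepsilon$$ holds.
   Context: $\varrho$ is $\mathbb{R}$-affine if it is affine as a map $\mathbb{R}^2\to\mathbb{R}^2$ under $\mathbb{C}\cong\mathbb{R}^2$. A map $\mathbb{C}^a\to\mathbb{C}^b$ is $\mathbb{C}$-affine if it has the form $z\mapsto Az+b$ with complex $A,b$. $\varrho^{\times4}$ applies $\varrho$ componentwise on $\mathbb{C}^4$. $C^2(\mathbb{C};\mathbb{C})$: continuous partial derivatives (real sense) up to order 2. *)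

theory Defs
  imports "HOL-Analysis.Analysis"
begin

text \<open>Directional (real) partial derivative of \<open>f :: complex \<Rightarrow> complex\<close> at \<open>z\<close>
  in direction \<open>v\<close> (we use \<open>v = 1\<close> for \<open>\<partial>/\<partial>x\<close> and \<open>v = \<i>\<close> for \<open>\<partial>/\<partial>y\<close>).\<close>
definition has_partial :: "complex \<Rightarrow> (complex \<Rightarrow> complex) \<Rightarrow> complex \<Rightarrow> bool" where
  "has_partial v f z \<longleftrightarrow> (\<lambda>t::real. f (z + of_real t * v)) differentiable (at 0)"

definition partial :: "complex \<Rightarrow> (complex \<Rightarrow> complex) \<Rightarrow> complex \<Rightarrow> complex" where
  "partial v f z = vector_derivative (\<lambda>t::real. f (z + of_real t * v)) (at 0)"

definition C2 :: "(complex \<Rightarrow> complex) \<Rightarrow> bool" where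
  "C2 f \<longleftrightarrow> continuous_on UNIV f
     \<and> (\<forall>v\<in>{1, \<i>}. (\<forall>z. has_partial v f z) \<and> continuous_on UNIV (partial v f)
         \<and> (\<forall>w\<in>{1, \<i>}. (\<forall>z. has_partial w (partial v f) z)
                        \<and> continuous_on UNIV (partial w (partial v f))))"

text \<open>\<open>\<real>\<close>-affine: affine as a map \<open>\<real>\<^sup>2 \<rightarrow> \<real>\<^sup>2\<close>, i.e. real-linear plus a constant.\<close>
definition R_affine :: "(complex \<Rightarrow> complex) \<Rightarrow> bool" where
  "R_affine f \<longleftrightarrow> (\<exists>A b. linear A \<and> (\<forall>z. f z = A z + b))"

definition C_affine_1_4 :: "(complex \<Rightarrow> complex ^ 4) \<Rightarrow> bool" where
  "C_affine_1_4 \<phi> \<longleftrightarrow> (\<exists>a b :: complex ^ 4. \<forall>z. \<phi> z = (\<chi> i. a $ i * z + b $ i))"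

definition C_affine_4_1 :: "(complex ^ 4 \<Rightarrow> complex) \<Rightarrow> bool" where
  "C_affine_4_1 \<psi> \<longleftrightarrow> (\<exists>(c :: complex ^ 4) (d :: complex). \<forall>w. \<psi> w = (\<Sum>i\<in>UNIV. c $ i * w $ i) + d)"

definition rho4 :: "(complex \<Rightarrow> complex) \<Rightarrow> complex ^ 4 \<Rightarrow> complex ^ 4" where
  "rho4 \<rho> w = (\<chi> i. \<rho> (w $ i))"

text \<open>\<open>sup\<^sub>z\<^sub>\<in>\<^sub>K |g z| < \<epsilon>\<close> (supremum in the extended sense, so empty \<open>K\<close> is fine).\<close>
definition sup_lt :: "complex set \<Rightarrow> (complex \<Rightarrow> complex) \<Rightarrow> real \<Rightarrow> bool" where
  "sup_lt K g \<epsilon> \<longleftrightarrow> (\<exists>\<delta><\<epsilon>. \<forall>z\<in>K. cmod (g z) \<le> \<delta>)"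

end

theory Submission imports Defs begin

lemma L1:
  fixes g g' :: "real \<Rightarrow> complex"
  assumes d: "\<And>t. (g has_vector_derivative g' t) (at t)"
    and b: "\<And>t. \<bar>t\<bar> \<le> \<bar>h\<bar> \<Longrightarrow> cmod (g' t - c) \<le> M"
  shows "cmod (g h - g 0 - of_real h * c) \<le> M * \<bar>h\<bar>"
proof -
  define G where "G t = g t - of_real t * c" for t
  have dG: "(G has_vector_derivative (g' t - c)) (at t)" for t
    unfolding G_def by (auto intro!: derivative_eq_intros d)
  have "norm (G h - G 0) \<le> M * norm (h - 0)"
  proof (rule differentiable_bound[where S="closed_segment 0 h" and f'="\<lambda>t u. u *\<^sub>R (g' t - c)"])
    show "convex (closed_segment 0 h)" by simp
    show "(G has_derivative (\<lambda>u. u *\<^sub>R (g' x - c))) (at x within closed_segment 0 h)" for x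
      using dG[of x] by (simp add: has_vector_derivative_def has_derivative_at_withinI)
    fix x assume x: "x \<in> closed_segment 0 h"
    then have "\<bar>x\<bar> \<le> \<bar>h\<bar>" by (auto simp: closed_segment_eq_real_ivl split: if_splits)
    have "onorm (\<lambda>u::real. u *\<^sub>R (g' x - c)) = onorm (\<lambda>u::real. u) * norm (g' x - c)"
      by (rule onorm_scaleR_left) (rule bounded_linear_ident)
    also have "\<dots> = norm (g' x - c)" by (simp add: onorm_id)
    finally show "onorm (\<lambda>u::real. u *\<^sub>R (g' x - c)) \<le> M" using b[OF \<open>\<bar>x\<bar> \<le> \<bar>h\<bar>\<close>] by simp
  qed auto
  then show ?thesis by (simp add: G_def algebra_simps)
qed

lemma deriv_line:
  assumes "\<forall>z. has_partial v f z"
  shows "((\<lambda>t. f (z + of_real t * v)) has_vector_derivative partial v f (z + of_real s * v)) (at s)"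
proof -
  let ?k = "\<lambda>t::real. f ((z + of_real s * v) + of_real t * v)"
  have "?k differentiable (at 0)" using assms by (simp add: has_partial_def)
  then have k: "(?k has_vector_derivative partial v f (z + of_real s * v)) (at 0)"
    unfolding partial_def by (rule vector_derivative_works[THEN iffD1])
  have sh: "((\<lambda>t::real. t - s) has_vector_derivative 1) (at s)"
    by (auto intro!: derivative_eq_intros)
  have "((?k \<circ> (\<lambda>t. t - s)) has_vector_derivative (1 *\<^sub>R partial v f (z + of_real s * v))) (at s)"
    by (rule vector_diff_chain_at[OF sh]) (use k in simp)
  moreover have "?k \<circ> (\<lambda>t. t - s) = (\<lambda>t. f (z + of_real t * v))"
    by (auto simp: fun_eq_iff algebra_simps)
  ultimately show ?thesis by simp
qed

lemma L2:
  fixes g p q :: "real \<Rightarrow> complex"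
  assumes d1: "\<And>t. (g has_vector_derivative p t) (at t)"
    and d2: "\<And>t. (p has_vector_derivative q t) (at t)"
    and b: "\<And>t. \<bar>t\<bar> \<le> \<bar>h\<bar> \<Longrightarrow> cmod (q t - c) \<le> M"
  shows "cmod (g h - g 0 - of_real h * p 0 - of_real (h^2/2) * c) \<le> M * h^2"
proof -
  have M0: "0 \<le> M" using b[of 0] norm_ge_zero[of "q 0 - c"] by linarith
  define G where "G t = g t - of_real t * p 0 - of_real (t^2/2) * c" for t
  have dG: "(G has_vector_derivative (p t - p 0 - of_real t * c)) (at t)" for t
  proof -
    have f: "((\<lambda>t::real. t^2/2) has_field_derivative t) (at t)"
      by (auto intro!: derivative_eq_intros)
    have sq: "((\<lambda>t::real. complex_of_real (t^2/2) * c) has_vector_derivative (complex_of_real t * c)) (at t)"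
      by (rule has_vector_derivative_mult_left[OF has_vector_derivative_of_real[OF f]])
    have a: "((\<lambda>t. g t - of_real t * p 0) has_vector_derivative (p t - p 0)) (at t)"
      by (auto intro!: derivative_eq_intros d1)
    show ?thesis unfolding G_def using has_vector_derivative_diff[OF a sq] by simp
  qed
  have "cmod (G h - G 0 - of_real h * 0) \<le> (M * \<bar>h\<bar>) * \<bar>h\<bar>"
  proof (rule L1[OF dG])
    fix t :: real assume t: "\<bar>t\<bar> \<le> \<bar>h\<bar>"
    have "cmod (p t - p 0 - of_real t * c) \<le> M * \<bar>t\<bar>"
      by (rule L1[OF d2]) (use b t in auto)
    also have "\<dots> \<le> M * \<bar>h\<bar>" using t M0 by (simp add: mult_left_mono)
    finally show "cmod (p t - p 0 - complex_of_real t * c - 0) \<le> M * \<bar>h\<bar>" by simp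
  qed
  moreover have "G h - G 0 - of_real h * 0 = g h - g 0 - of_real h * p 0 - of_real (h^2/2) * c"
    by (simp add: G_def)
  moreover have "M * \<bar>h\<bar> * \<bar>h\<bar> = M * h^2"
    by (metis abs_mult_self_eq mult.assoc power2_eq_square)
  ultimately show ?thesis by simp
qed

lemma taylor:
  fixes \<rho> :: "complex \<Rightarrow> complex" and h x y :: real
  assumes hp1: "\<forall>z. has_partial 1 \<rho> z" and hpi: "\<forall>z. has_partial \<i> \<rho> z"
    and hp11: "\<forall>z. has_partial 1 (partial 1 \<rho>) z"
    and hp1i: "\<forall>z. has_partial 1 (partial \<i> \<rho>) z"
    and hpii: "\<forall>z. has_partial \<i> (partial \<i> \<rho>) z"
    and cont: "\<And>u. dist u z0 < \<delta> \<Longrightarrow> cmod (partial 1 (partial 1 \<rho>) u - A) \<le> \<eta>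
        \<and> cmod (partial 1 (partial \<i> \<rho>) u - B) \<le> \<eta> \<and> cmod (partial \<i> (partial \<i> \<rho>) u - C) \<le> \<eta>"
    and hd: "\<bar>h\<bar> * (\<bar>x\<bar> + \<bar>y\<bar>) < \<delta>"
  shows "cmod (\<rho> (z0 + of_real (h*x) + of_real (h*y) * \<i>) - \<rho> z0
          - of_real (h*x) * partial 1 \<rho> z0 - of_real (h*y) * partial \<i> \<rho> z0
          - of_real (h^2) * (of_real (x^2/2) * A + of_real (x*y) * B + of_real (y^2/2) * C))
         \<le> \<eta> * h^2 * (x^2 + y^2 + \<bar>x*y\<bar>)"
proof -
  let ?P1 = "partial 1 \<rho>" and ?Pi = "partial \<i> \<rho>"
  have dist1: "dist (z0 + of_real (h*x) + of_real s * \<i>) z0 < \<delta>" if "\<bar>s\<bar> \<le> \<bar>h*y\<bar>" for s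
  proof -
    have "dist (z0 + of_real (h*x) + of_real s * \<i>) z0 = cmod (of_real (h*x) + of_real s * \<i>)"
      by (simp add: dist_norm)
    also have "\<dots> \<le> cmod (of_real (h*x)) + cmod (of_real s * \<i>)" by (rule norm_triangle_ineq)
    also have "\<dots> = \<bar>h*x\<bar> + \<bar>s\<bar>" by (simp add: norm_mult abs_mult)
    also have "\<dots> \<le> \<bar>h*x\<bar> + \<bar>h*y\<bar>" using that by simp
    also have "\<dots> = \<bar>h\<bar> * (\<bar>x\<bar> + \<bar>y\<bar>)" by (simp add: abs_mult distrib_left)
    finally show ?thesis using hd by linarith
  qed
  have dist2: "dist (z0 + of_real s * 1) z0 < \<delta>" if "\<bar>s\<bar> \<le> \<bar>h*x\<bar>" for s
  proof -
    have "dist (z0 + of_real s * 1) z0 = \<bar>s\<bar>" by (simp add: dist_norm)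
    also have "\<dots> \<le> \<bar>h\<bar> * (\<bar>x\<bar> + \<bar>y\<bar>)" using that
      by (simp add: abs_mult distrib_left) (metis abs_ge_zero add_increasing2 abs_mult)
    finally show ?thesis using hd by linarith
  qed
  have Ea: "cmod (\<rho> (z0 + of_real (h*x) + of_real (h*y) * \<i>) - \<rho> (z0 + of_real (h*x))
      - of_real (h*y) * ?Pi (z0 + of_real (h*x)) - of_real ((h*y)^2/2) * C) \<le> \<eta> * (h*y)^2"
    using L2[where g="\<lambda>s. \<rho> ((z0 + of_real (h*x)) + of_real s * \<i>)"
        and p="\<lambda>s. ?Pi ((z0 + of_real (h*x)) + of_real s * \<i>)"
        and q="\<lambda>s. partial \<i> ?Pi ((z0 + of_real (h*x)) + of_real s * \<i>)"
        and h="h*y" and c=C and M=\<eta>,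
        OF deriv_line[OF hpi] deriv_line[OF hpii]] cont dist1
    by (simp add: add.assoc)
  have Eb: "cmod (?Pi (z0 + of_real (h*x)) - ?Pi z0 - of_real (h*x) * B) \<le> \<eta> * \<bar>h*x\<bar>"
    using L1[where g="\<lambda>s. ?Pi (z0 + of_real s * 1)"
        and g'="\<lambda>s. partial 1 ?Pi (z0 + of_real s * 1)"
        and h="h*x" and c=B and M=\<eta>, OF deriv_line[OF hp1i]] cont dist2
    by simp
  have Ec: "cmod (\<rho> (z0 + of_real (h*x)) - \<rho> z0 - of_real (h*x) * ?P1 z0 - of_real ((h*x)^2/2) * A)
      \<le> \<eta> * (h*x)^2"
    using L2[where g="\<lambda>s. \<rho> (z0 + of_real s * 1)"
        and p="\<lambda>s. ?P1 (z0 + of_real s * 1)"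
        and q="\<lambda>s. partial 1 ?P1 (z0 + of_real s * 1)"
        and h="h*x" and c=A and M=\<eta>,
        OF deriv_line[OF hp1] deriv_line[OF hp11]] cont dist2
    by simp
  define ea where "ea = \<rho> (z0 + of_real (h*x) + of_real (h*y) * \<i>) - \<rho> (z0 + of_real (h*x))
      - of_real (h*y) * ?Pi (z0 + of_real (h*x)) - of_real ((h*y)^2/2) * C"
  define eb where "eb = ?Pi (z0 + of_real (h*x)) - ?Pi z0 - of_real (h*x) * B"
  define ec where "ec = \<rho> (z0 + of_real (h*x)) - \<rho> z0 - of_real (h*x) * ?P1 z0 - of_real ((h*x)^2/2) * A"
  have eq: "\<rho> (z0 + of_real (h*x) + of_real (h*y) * \<i>) - \<rho> z0
          - of_real (h*x) * partial 1 \<rho> z0 - of_real (h*y) * partial \<i> \<rho> z0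
          - of_real (h^2) * (of_real (x^2/2) * A + of_real (x*y) * B + of_real (y^2/2) * C)
          = ea + ec + of_real (h*y) * eb"
    unfolding ea_def eb_def ec_def by (simp add: algebra_simps power2_eq_square)
  have "cmod (ea + ec + of_real (h*y) * eb) \<le> cmod ea + cmod ec + \<bar>h*y\<bar> * cmod eb"
  proof -
    have "cmod (ea + ec + of_real (h*y) * eb) \<le> cmod (ea + ec) + cmod (of_real (h*y) * eb)"
      by (rule norm_triangle_ineq)
    also have "\<dots> \<le> cmod ea + cmod ec + cmod (of_real (h*y) * eb)"
      using norm_triangle_ineq[of ea ec] by linarith
    finally show ?thesis by (simp add: norm_mult abs_mult)
  qed
  also have "\<dots> \<le> \<eta> * (h*y)^2 + \<eta> * (h*x)^2 + \<bar>h*y\<bar> * (\<eta> * \<bar>h*x\<bar>)"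
    using Ea Eb Ec unfolding ea_def eb_def ec_def
    by (intro add_mono mult_left_mono) auto
  also have "\<dots> = \<eta> * h^2 * (x^2 + y^2 + \<bar>x*y\<bar>)"
    by (simp add: algebra_simps power2_eq_square abs_mult)
  finally show ?thesis using eq by simp
qed

definition Qf :: "complex \<Rightarrow> complex \<Rightarrow> complex \<Rightarrow> complex \<Rightarrow> complex" where
  "Qf A B C w = of_real ((Re w)^2/2) * A + of_real (Re w * Im w) * B + of_real ((Im w)^2/2) * C"

definition Sf :: "complex \<Rightarrow> real" where
  "Sf w = (Re w)^2 + (Im w)^2 + \<bar>Re w * Im w\<bar>"

lemma a1: "(A::complex) + C \<noteq> 0 \<Longrightarrow> X^2+Y^2 = 2/(A+C)*(X^2/2*A + X*Y*B + Y^2/2*C) + 2/(A+C)*(Y^2/2*A - Y*X*B + X^2/2*C)"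
proof -
  assume h: "A + C \<noteq> 0"
  have e: "(A+C)*(X^2+Y^2) = 2*(X^2/2*A + X*Y*B + Y^2/2*C) + 2*(Y^2/2*A - Y*X*B + X^2/2*C)"
    by algebra
  have "X^2+Y^2 = ((A+C)*(X^2+Y^2)) / (A+C)" using h by simp
  also have "\<dots> = (2*(X^2/2*A + X*Y*B + Y^2/2*C) + 2*(Y^2/2*A - Y*X*B + X^2/2*C)) / (A+C)"
    by (simp only: e)
  also have "\<dots> = 2/(A+C)*(X^2/2*A + X*Y*B + Y^2/2*C) + 2/(A+C)*(Y^2/2*A - Y*X*B + X^2/2*C)"
    by (simp only: add_divide_distrib times_divide_eq_left)
  finally show ?thesis .
qed
lemma a2e: "(A - \<i>*B) * (X + \<i>*Y)^2 = 2 * (X^2/2*A + X*Y*B - Y^2/2*A) - \<i> * ((X-Y)^2/2*A + (X-Y)*(X+Y)*B - (X+Y)^2/2*A)"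
  by (simp add: power2_eq_square algebra_simps) (simp add: field_simps)
lemma a2: "(A - \<i>*B) \<noteq> 0 \<Longrightarrow> (X + \<i>*Y)^2 = 2/(A - \<i>*B) * (X^2/2*A + X*Y*B - Y^2/2*A) + (-\<i>/(A - \<i>*B)) * ((X-Y)^2/2*A + (X-Y)*(X+Y)*B - (X+Y)^2/2*A)"
proof -
  assume h: "A - \<i>*B \<noteq> 0"
  have "(X + \<i>*Y)^2 = ((A - \<i>*B) * (X + \<i>*Y)^2) / (A - \<i>*B)" using h by simp
  also have "\<dots> = (2 * (X^2/2*A + X*Y*B - Y^2/2*A) - \<i> * ((X-Y)^2/2*A + (X-Y)*(X+Y)*B - (X+Y)^2/2*A)) / (A - \<i>*B)"
    by (simp only: a2e)
  also have "\<dots> = 2/(A - \<i>*B) * (X^2/2*A + X*Y*B - Y^2/2*A) + (-\<i>/(A - \<i>*B)) * ((X-Y)^2/2*A + (X-Y)*(X+Y)*B - (X+Y)^2/2*A)"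
    by (simp add: diff_divide_distrib)
  finally show ?thesis .
qed
lemma a3: "(A::complex) \<noteq> 0 \<Longrightarrow> (X - \<i>*Y)^2 = 2/A * (X^2/2*A + X*Y*(-\<i>*A) + Y^2/2*(-A))"
proof -
  assume h: "A \<noteq> 0"
  have e: "A * (X - \<i>*Y)^2 = 2 * (X^2/2*A + X*Y*(-\<i>*A) + Y^2/2*(-A))" using i_squared by algebra
  have "(X - \<i>*Y)^2 = (A * (X - \<i>*Y)^2) / A" using h by simp
  also have "\<dots> = 2 * (X^2/2*A + X*Y*(-\<i>*A) + Y^2/2*(-A)) / A" by (simp only: e)
  also have "\<dots> = 2/A * (X^2/2*A + X*Y*(-\<i>*A) + Y^2/2*(-A))" by simp
  finally show ?thesis .
qed


lemma alg1: "(H::complex) \<noteq> 0 \<Longrightarrow> \<alpha>/(2*H)*p1 + \<alpha>/(2*H)*p2 + \<beta>/(2*H)*p3 + \<beta>/(2*H)*p4 + (-(\<alpha>+\<beta>)*r/H)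
   = \<alpha>*((p1+p2-2*r)/(2*H)) + \<beta>*((p3+p4-2*r)/(2*H))"
  by (simp add: field_simps)
lemma alg2: "(M::real) > 0 \<Longrightarrow> P > 0 \<Longrightarrow> M * (\<epsilon>/(4*M*P) * (2*Q)) = \<epsilon>/2*(Q/P)"
  by (simp add: field_simps)
lemma N1: "\<bar>R::real\<bar> + 1 \<le> (\<bar>R\<bar> + 1) * (1 + cmod \<omega>)"
proof -
  have "0 \<le> (\<bar>R\<bar>+1) * cmod \<omega>" by simp
  then show ?thesis by (simp add: algebra_simps)
qed
lemma nb: "cmod (\<alpha> * X + \<beta> * Y) \<le> cmod \<alpha> * e + cmod \<beta> * e" if "cmod X \<le> e" "cmod Y \<le> e"
proof -
  have "cmod (\<alpha> * X + \<beta> * Y) \<le> cmod \<alpha> * cmod X + cmod \<beta> * cmod Y"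
    using norm_triangle_ineq[of "\<alpha>*X" "\<beta>*Y"] by (simp add: norm_mult)
  also have "\<dots> \<le> cmod \<alpha> * e + cmod \<beta> * e" using that by (intro add_mono mult_left_mono) auto
  finally show ?thesis .
qed

lemma aux_diff: "(c::complex) + d = c1 + c2 + d' \<Longrightarrow> a - b - c - d = a - b - c1 - c2 - d'"
  by (metis diff_diff_eq)

lemma Sf_le: "Sf w \<le> 2 * (cmod w)^2"
proof -
  have p: "0 \<le> \<bar>Re w\<bar> * \<bar>Im w\<bar>" by simp
  have q: "2 * (\<bar>Re w\<bar> * \<bar>Im w\<bar>) \<le> (Re w)^2 + (Im w)^2"
    using sum_squares_bound[of "\<bar>Re w\<bar>" "\<bar>Im w\<bar>"] by (simp add: mult.assoc)
  have "Sf w = (Re w)^2 + (Im w)^2 + \<bar>Re w\<bar> * \<bar>Im w\<bar>" unfolding Sf_def abs_mult ..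
  moreover have "(cmod w)^2 = (Re w)^2 + (Im w)^2" by (rule cmod_power2)
  ultimately show ?thesis using p q by linarith
qed

lemma Sf_ge: "0 \<le> Sf w" unfolding Sf_def by simp

context
  fixes \<rho> :: "complex \<Rightarrow> complex" and z0 :: complex
  assumes hp1: "\<forall>z. has_partial 1 \<rho> z" and hpi: "\<forall>z. has_partial \<i> \<rho> z"
    and hp11: "\<forall>z. has_partial 1 (partial 1 \<rho>) z"
    and hp1i: "\<forall>z. has_partial 1 (partial \<i> \<rho>) z"
    and hpii: "\<forall>z. has_partial \<i> (partial \<i> \<rho>) z"
begin

lemma taylor_w:
  assumes cont: "\<And>u. dist u z0 < \<delta> \<Longrightarrow> cmod (partial 1 (partial 1 \<rho>) u - A) \<le> \<eta>
        \<and> cmod (partial 1 (partial \<i> \<rho>) u - B) \<le> \<eta> \<and> cmod (partial \<i> (partial \<i> \<rho>) u - C) \<le> \<eta>"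
    and hd: "\<bar>h\<bar> * (\<bar>Re w\<bar> + \<bar>Im w\<bar>) < \<delta>"
  shows "cmod (\<rho> (z0 + of_real h * w) - \<rho> z0
     - of_real h * (of_real (Re w) * partial 1 \<rho> z0 + of_real (Im w) * partial \<i> \<rho> z0)
     - of_real (h^2) * Qf A B C w) \<le> \<eta> * h^2 * Sf w"
proof -
  have arg: "z0 + of_real h * w = z0 + of_real (h*Re w) + of_real (h*Im w) * \<i>"
    by (simp add: complex_eq_iff)
  have e: "of_real h * (of_real (Re w) * partial 1 \<rho> z0 + of_real (Im w) * partial \<i> \<rho> z0)
     + of_real (h^2) * Qf A B C w
     = of_real (h*Re w) * partial 1 \<rho> z0 + of_real (h*Im w) * partial \<i> \<rho> z0
     + of_real (h^2) * (of_real ((Re w)^2/2) * A + of_real (Re w * Im w) * B + of_real ((Im w)^2/2) * C)"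
    by (simp add: Qf_def algebra_simps)
  show ?thesis
    unfolding arg aux_diff[OF e] Sf_def
    by (rule taylor[OF hp1 hpi hp11 hp1i hpii cont]) (use hd in auto)
qed

lemma sym_est:
  assumes cont: "\<And>u. dist u z0 < \<delta> \<Longrightarrow> cmod (partial 1 (partial 1 \<rho>) u - A) \<le> \<eta>
        \<and> cmod (partial 1 (partial \<i> \<rho>) u - B) \<le> \<eta> \<and> cmod (partial \<i> (partial \<i> \<rho>) u - C) \<le> \<eta>"
    and hd: "\<bar>h\<bar> * (\<bar>Re w\<bar> + \<bar>Im w\<bar>) < \<delta>" and h0: "h \<noteq> 0"
  shows "cmod ((\<rho> (z0 + of_real h * w) + \<rho> (z0 - of_real h * w) - 2 * \<rho> z0) / (2 * of_real (h^2))
            - Qf A B C w) \<le> \<eta> * Sf w"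
proof -
  define L where "L = of_real (Re w) * partial 1 \<rho> z0 + of_real (Im w) * partial \<i> \<rho> z0"
  define e1 where "e1 = \<rho> (z0 + of_real h * w) - \<rho> z0 - of_real h * L - of_real (h^2) * Qf A B C w"
  define e2 where "e2 = \<rho> (z0 - of_real h * w) - \<rho> z0 + of_real h * L - of_real (h^2) * Qf A B C w"
  have E1: "cmod e1 \<le> \<eta> * h^2 * Sf w" unfolding e1_def L_def by (rule taylor_w[OF cont hd])
  have hd': "\<bar>h\<bar> * (\<bar>Re (-w)\<bar> + \<bar>Im (-w)\<bar>) < \<delta>" using hd by simp
  have E2: "cmod e2 \<le> \<eta> * h^2 * Sf w"
  proof -
    have "cmod (\<rho> (z0 + of_real h * (-w)) - \<rho> z0
     - of_real h * (of_real (Re (-w)) * partial 1 \<rho> z0 + of_real (Im (-w)) * partial \<i> \<rho> z0)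
     - of_real (h^2) * Qf A B C (-w)) \<le> \<eta> * h^2 * Sf (-w)"
      by (rule taylor_w[OF cont hd'])
    moreover have "Qf A B C (-w) = Qf A B C w" by (simp add: Qf_def)
    moreover have "Sf (-w) = Sf w" by (simp add: Sf_def)
    ultimately show ?thesis unfolding e2_def L_def by (simp add: algebra_simps)
  qed
  have h2: "(of_real (h^2) :: complex) \<noteq> 0" using h0 by simp
  have "(\<rho> (z0 + of_real h * w) + \<rho> (z0 - of_real h * w) - 2 * \<rho> z0) / (2 * of_real (h^2))
            - Qf A B C w = (e1 + e2) / (2 * of_real (h^2))"
    using h2 unfolding e1_def e2_def by (simp add: field_simps)
  also have "cmod \<dots> = cmod (e1 + e2) / (2 * h^2)" by (simp add: norm_divide norm_power)
  also have "\<dots> \<le> (cmod e1 + cmod e2) / (2 * h^2)"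
    by (rule divide_right_mono) (auto intro: norm_triangle_ineq)
  also have "\<dots> \<le> (2 * (\<eta> * h^2 * Sf w)) / (2 * h^2)"
    by (rule divide_right_mono) (use E1 E2 in auto)
  also have "\<dots> = \<eta> * Sf w" using h0 by simp
  finally show ?thesis .
qed


lemma construct:
  assumes cont_ex: "\<And>\<eta>. \<eta> > 0 \<Longrightarrow> \<exists>\<delta>>0. \<forall>u. dist u z0 < \<delta> \<longrightarrow> cmod (partial 1 (partial 1 \<rho>) u - A) \<le> \<eta>
        \<and> cmod (partial 1 (partial \<i> \<rho>) u - B) \<le> \<eta> \<and> cmod (partial \<i> (partial \<i> \<rho>) u - C) \<le> \<eta>"
    and T_eq: "\<And>z. T z = \<alpha> * Qf A B C z + \<beta> * Qf A B C (\<omega> * z)"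
    and K: "compact K" and \<epsilon>: "\<epsilon> > 0"
  shows "\<exists>(\<phi> :: complex \<Rightarrow> complex ^ 4) (\<psi> :: complex ^ 4 \<Rightarrow> complex).
           C_affine_1_4 \<phi> \<and> C_affine_4_1 \<psi> \<and> sup_lt K (\<lambda>z. (\<psi> \<circ> rho4 \<rho> \<circ> \<phi>) z - T z) \<epsilon>"
proof -
  obtain R where R: "\<And>z. z \<in> K \<Longrightarrow> cmod z \<le> R"
    using compact_imp_bounded[OF K] unfolding bounded_iff by blast
  define N where "N = (\<bar>R\<bar> + 1) * (1 + cmod \<omega>)"
  have N1: "\<bar>R\<bar> + 1 \<le> N" unfolding N_def by (rule N1)
  have N2: "cmod \<omega> * (\<bar>R\<bar> + 1) \<le> N" unfolding N_def
    by (simp add: algebra_simps)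
  have N0: "0 \<le> N" using N1 by linarith
  have Nz: "cmod z \<le> N" if "z \<in> K" for z using R[OF that] N1 by linarith
  have Nwz: "cmod (\<omega> * z) \<le> N" if "z \<in> K" for z
  proof -
    have "cmod (\<omega> * z) = cmod \<omega> * cmod z" by (simp add: norm_mult)
    also have "\<dots> \<le> cmod \<omega> * (\<bar>R\<bar> + 1)" using R[OF that] by (intro mult_left_mono) auto
    finally show ?thesis using N2 by linarith
  qed
  define M where "M = cmod \<alpha> + cmod \<beta> + 1"
  have M1: "M \<ge> 1" unfolding M_def by simp
  define \<eta> where "\<eta> = \<epsilon> / (4 * M * (N^2 + 1))"
  have Np: "0 < N^2 + 1" using add_nonneg_pos[OF zero_le_power2[of N] zero_less_one] .
  have \<eta>0: "\<eta> > 0" unfolding \<eta>_def using \<epsilon> M1 Np by (intro divide_pos_pos mult_pos_pos) auto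
  obtain \<delta> where \<delta>0: "\<delta> > 0" and cont: "\<And>u. dist u z0 < \<delta> \<Longrightarrow> cmod (partial 1 (partial 1 \<rho>) u - A) \<le> \<eta>
        \<and> cmod (partial 1 (partial \<i> \<rho>) u - B) \<le> \<eta> \<and> cmod (partial \<i> (partial \<i> \<rho>) u - C) \<le> \<eta>"
    using cont_ex[OF \<eta>0] by blast
  define h where "h = \<delta> / (2 * N + 1)"
  have h0: "h > 0" unfolding h_def using \<delta>0 N0 by simp
  have hd: "\<bar>h\<bar> * (\<bar>Re w\<bar> + \<bar>Im w\<bar>) < \<delta>" if "cmod w \<le> N" for w
  proof -
    have "\<bar>Re w\<bar> + \<bar>Im w\<bar> \<le> 2 * N" using abs_Re_le_cmod[of w] abs_Im_le_cmod[of w] that by linarith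
    then have "\<bar>h\<bar> * (\<bar>Re w\<bar> + \<bar>Im w\<bar>) \<le> h * (2 * N)" using h0 by (simp add: mult_left_mono)
    also have "\<dots> < h * (2 * N + 1)" using h0 by simp
    also have "\<dots> = \<delta>" unfolding h_def using N0 by simp
    finally show ?thesis .
  qed
  have hn: "h \<noteq> 0" using h0 by simp
  define S where "S w = (\<rho> (z0 + of_real h * w) + \<rho> (z0 - of_real h * w) - 2 * \<rho> z0) / (2 * of_real (h^2))" for w
  have SQ: "cmod (S w - Qf A B C w) \<le> \<eta> * (2 * N^2)" if "cmod w \<le> N" for w
  proof -
    have "cmod (S w - Qf A B C w) \<le> \<eta> * Sf w"
      unfolding S_def by (rule sym_est[OF cont hd[OF that] hn])
    also have "\<dots> \<le> \<eta> * (2 * (cmod w)^2)" using \<eta>0 Sf_le[of w] by (simp add: mult_left_mono)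
    also have "\<dots> \<le> \<eta> * (2 * N^2)" using \<eta>0 that by (simp add: mult_left_mono power_mono)
    finally show ?thesis .
  qed
  define a :: "complex^4" where "a = (\<chi> j. if j = 1 then of_real h else if j = 2 then - of_real h
      else if j = 3 then of_real h * \<omega> else - (of_real h * \<omega>))"
  define b :: "complex^4" where "b = (\<chi> j. z0)"
  define c :: "complex^4" where "c = (\<chi> j. if j = 1 \<or> j = 2 then \<alpha> / (2 * of_real (h^2)) else \<beta> / (2 * of_real (h^2)))"
  define d where "d = - (\<alpha> + \<beta>) * \<rho> z0 / of_real (h^2)"
  define \<phi> :: "complex \<Rightarrow> complex^4" where "\<phi> z = (\<chi> i. a $ i * z + b $ i)" for z
  define \<psi> :: "complex^4 \<Rightarrow> complex" where "\<psi> w = (\<Sum>i\<in>UNIV. c $ i * w $ i) + d" for w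
  have ca: "C_affine_1_4 \<phi>" unfolding C_affine_1_4_def \<phi>_def by blast
  have cb: "C_affine_4_1 \<psi>" unfolding C_affine_4_1_def \<psi>_def by blast
  have comp: "(\<psi> \<circ> rho4 \<rho> \<circ> \<phi>) z = \<alpha> * S z + \<beta> * S (\<omega> * z)" for z
  proof -
    have e1: "a $ 1 * z + b $ 1 = z0 + of_real h * z" by (simp add: a_def b_def algebra_simps)
    have e2: "a $ 2 * z + b $ 2 = z0 - of_real h * z" by (simp add: a_def b_def algebra_simps)
    have e3: "a $ 3 * z + b $ 3 = z0 + of_real h * (\<omega> * z)" by (simp add: a_def b_def algebra_simps)
    have e4: "a $ 4 * z + b $ 4 = z0 - of_real h * (\<omega> * z)" by (simp add: a_def b_def algebra_simps)
    have c1: "c $ 1 = \<alpha> / (2 * of_real (h^2))" "c $ 2 = \<alpha> / (2 * of_real (h^2))"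
      "c $ 3 = \<beta> / (2 * of_real (h^2))" "c $ 4 = \<beta> / (2 * of_real (h^2))" by (simp_all add: c_def)
    have "(\<psi> \<circ> rho4 \<rho> \<circ> \<phi>) z = c $ 1 * \<rho> (a $ 1 * z + b $ 1) + c $ 2 * \<rho> (a $ 2 * z + b $ 2)
        + c $ 3 * \<rho> (a $ 3 * z + b $ 3) + c $ 4 * \<rho> (a $ 4 * z + b $ 4) + d"
      by (simp add: \<psi>_def \<phi>_def rho4_def sum_4)
    also have "\<dots> = \<alpha> * S z + \<beta> * S (\<omega> * z)"
      unfolding e1 e2 e3 e4 c1 S_def d_def by (rule alg1) (use hn in simp)
    finally show ?thesis .
  qed
  have bnd: "cmod ((\<psi> \<circ> rho4 \<rho> \<circ> \<phi>) z - T z) \<le> \<epsilon> / 2" if "z \<in> K" for z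
  proof -
    have "(\<psi> \<circ> rho4 \<rho> \<circ> \<phi>) z - T z = \<alpha> * (S z - Qf A B C z) + \<beta> * (S (\<omega> * z) - Qf A B C (\<omega> * z))"
      unfolding comp T_eq by (simp add: algebra_simps)
    also have "cmod \<dots> \<le> cmod \<alpha> * (\<eta> * (2 * N^2)) + cmod \<beta> * (\<eta> * (2 * N^2))"
      by (rule nb[OF SQ[OF Nz[OF that]] SQ[OF Nwz[OF that]]])
    also have "\<dots> = (cmod \<alpha> + cmod \<beta>) * (\<eta> * (2 * N^2))" by (simp add: algebra_simps)
    also have "\<dots> \<le> M * (\<eta> * (2 * N^2))" unfolding M_def using \<eta>0 by (simp add: mult_right_mono)
    also have "\<dots> = \<epsilon> / 2 * (N^2 / (N^2 + 1))" unfolding \<eta>_def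
      by (rule alg2) (use M1 Np in auto)
    also have "\<dots> \<le> \<epsilon> / 2 * 1"
    proof -
      have "N^2 / (N^2 + 1) \<le> 1" using Np by (simp add: divide_le_eq)
      then show ?thesis using \<epsilon> by (intro mult_left_mono) auto
    qed
    finally show ?thesis by simp
  qed
  have "sup_lt K (\<lambda>z. (\<psi> \<circ> rho4 \<rho> \<circ> \<phi>) z - T z) \<epsilon>"
    unfolding sup_lt_def using bnd \<epsilon> by (intro exI[of _ "\<epsilon>/2"]) auto
  with ca cb show ?thesis by blast
qed


lemma affine_if_zero:
  assumes z11: "\<And>z. partial 1 (partial 1 \<rho>) z = 0"
    and z1i: "\<And>z. partial 1 (partial \<i> \<rho>) z = 0"
    and zii: "\<And>z. partial \<i> (partial \<i> \<rho>) z = 0"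
  shows "R_affine \<rho>"
proof -
  let ?P1 = "partial 1 \<rho>" and ?Pi = "partial \<i> \<rho>"
  have Pi_h: "?Pi (u + of_real s * 1) = ?Pi u" for u s
    using L1[where g="\<lambda>s. ?Pi (u + of_real s * 1)" and g'="\<lambda>s. partial 1 ?Pi (u + of_real s * 1)"
        and h=s and c=0 and M=0, OF deriv_line[OF hp1i]] z1i by simp
  have Pi_v: "?Pi (u + of_real s * \<i>) = ?Pi u" for u s
    using L1[where g="\<lambda>s. ?Pi (u + of_real s * \<i>)" and g'="\<lambda>s. partial \<i> ?Pi (u + of_real s * \<i>)"
        and h=s and c=0 and M=0, OF deriv_line[OF hpii]] zii by simp
  have P1_h: "?P1 (u + of_real s * 1) = ?P1 u" for u s
    using L1[where g="\<lambda>s. ?P1 (u + of_real s * 1)" and g'="\<lambda>s. partial 1 ?P1 (u + of_real s * 1)"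
        and h=s and c=0 and M=0, OF deriv_line[OF hp11]] z11 by simp
  have Pi_c: "?Pi u = ?Pi 0" for u
  proof -
    have u: "u = of_real (Re u) + of_real (Im u) * \<i>" by (simp add: complex_eq_iff)
    have "?Pi u = ?Pi (of_real (Re u))" by (subst u, rule Pi_v)
    also have "\<dots> = ?Pi 0" using Pi_h[of 0 "Re u"] by simp
    finally show ?thesis .
  qed
  have rr: "\<rho> (of_real x) = \<rho> 0 + of_real x * ?P1 0" for x
  proof -
    have "cmod (\<rho> (0 + of_real x * 1) - \<rho> (0 + of_real 0 * 1) - of_real x * ?P1 0) \<le> 0 * \<bar>x\<bar>"
      by (rule L1[where g="\<lambda>s. \<rho> (0 + of_real s * 1)" and g'="\<lambda>s. ?P1 (0 + of_real s * 1)",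
          OF deriv_line[OF hp1]]) (use P1_h[of 0] in simp)
    then have "\<rho> (of_real x) - \<rho> 0 = of_real x * ?P1 0" by simp
    then show ?thesis by (metis add.commute diff_add_cancel)
  qed
  have rv: "\<rho> (of_real x + of_real y * \<i>) = \<rho> (of_real x) + of_real y * ?Pi 0" for x y
  proof -
    have "cmod (\<rho> (of_real x + of_real y * \<i>) - \<rho> (of_real x + of_real 0 * \<i>) - of_real y * ?Pi 0) \<le> 0 * \<bar>y\<bar>"
      by (rule L1[where g="\<lambda>s. \<rho> (of_real x + of_real s * \<i>)" and g'="\<lambda>s. ?Pi (of_real x + of_real s * \<i>)",
          OF deriv_line[OF hpi]]) (use Pi_c in simp)
    then have "\<rho> (of_real x + of_real y * \<i>) - \<rho> (of_real x) = of_real y * ?Pi 0" by simp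
    then show ?thesis by (metis add.commute diff_add_cancel)
  qed
  have all: "\<rho> u = (of_real (Re u) * ?P1 0 + of_real (Im u) * ?Pi 0) + \<rho> 0" for u
  proof -
    have u: "u = of_real (Re u) + of_real (Im u) * \<i>" by (simp add: complex_eq_iff)
    have "\<rho> u = \<rho> (of_real (Re u) + of_real (Im u) * \<i>)" by (subst u) simp
    also have "\<dots> = \<rho> 0 + of_real (Re u) * ?P1 0 + of_real (Im u) * ?Pi 0" by (simp add: rv rr)
    finally show ?thesis by simp
  qed
  have lin: "linear (\<lambda>u. of_real (Re u) * ?P1 0 + of_real (Im u) * ?Pi 0)"
    by (rule linearI) (simp_all add: algebra_simps scaleR_conv_of_real)
  show ?thesis unfolding R_affine_def using lin all by blast
qed

end


theorem proposition3p2: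
  fixes \<rho> :: "complex \<Rightarrow> complex" and K :: "complex set" and \<epsilon> :: real
  assumes "C2 \<rho>" and "\<not> R_affine \<rho>" and "compact K" and "\<epsilon> > 0"
  shows "\<exists>(\<phi> :: complex \<Rightarrow> complex ^ 4) (\<psi> :: complex ^ 4 \<Rightarrow> complex).
           C_affine_1_4 \<phi> \<and> C_affine_4_1 \<psi> \<and>
           (sup_lt K (\<lambda>z. (\<psi> \<circ> rho4 \<rho> \<circ> \<phi>) z - z * cnj z) \<epsilon>
          \<or> sup_lt K (\<lambda>z. (\<psi> \<circ> rho4 \<rho> \<circ> \<phi>) z - z ^ 2) \<epsilon>
          \<or> sup_lt K (\<lambda>z. (\<psi> \<circ> rho4 \<rho> \<circ> \<phi>) z - (cnj z) ^ 2) \<epsilon>)"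
proof -
  note C = assms(1)[unfolded C2_def]
  have hp1: "\<forall>z. has_partial 1 \<rho> z" and hpi: "\<forall>z. has_partial \<i> \<rho> z"
    and hp11: "\<forall>z. has_partial 1 (partial 1 \<rho>) z"
    and hp1i: "\<forall>z. has_partial 1 (partial \<i> \<rho>) z"
    and hpii: "\<forall>z. has_partial \<i> (partial \<i> \<rho>) z"
    and c11: "continuous_on UNIV (partial 1 (partial 1 \<rho>))"
    and c1i: "continuous_on UNIV (partial 1 (partial \<i> \<rho>))"
    and cii: "continuous_on UNIV (partial \<i> (partial \<i> \<rho>))"
    using C by auto
  obtain z0 where nz: "\<not> (partial 1 (partial 1 \<rho>) z0 = 0 \<and> partial 1 (partial \<i> \<rho>) z0 = 0
      \<and> partial \<i> (partial \<i> \<rho>) z0 = 0)"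
    using affine_if_zero[OF hp1 hpi hp11 hp1i hpii] assms(2) by blast
  define A where "A = partial 1 (partial 1 \<rho>) z0"
  define B where "B = partial 1 (partial \<i> \<rho>) z0"
  define Cc where "Cc = partial \<i> (partial \<i> \<rho>) z0"
  have ct: "\<exists>d>0. \<forall>u. dist u z0 < d \<longrightarrow> cmod (f u - f z0) \<le> e"
    if fc: "continuous_on UNIV f" and e0: "e > 0" for f :: "complex \<Rightarrow> complex" and e
  proof -
    obtain d where "d > 0" "\<forall>u. dist u z0 < d \<longrightarrow> dist (f u) (f z0) < e"
      using fc e0 unfolding continuous_on_iff by blast
    then show ?thesis by (intro exI[of _ d]) (auto simp: dist_norm less_imp_le)
  qed
  have cont_ex: "\<exists>\<delta>>0. \<forall>u. dist u z0 < \<delta> \<longrightarrow> cmod (partial 1 (partial 1 \<rho>) u - A) \<le> \<eta>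
        \<and> cmod (partial 1 (partial \<i> \<rho>) u - B) \<le> \<eta> \<and> cmod (partial \<i> (partial \<i> \<rho>) u - Cc) \<le> \<eta>"
    if e0: "\<eta> > 0" for \<eta>
  proof -
    obtain d1 where "d1 > 0" "\<forall>u. dist u z0 < d1 \<longrightarrow> cmod (partial 1 (partial 1 \<rho>) u - A) \<le> \<eta>"
      using ct[OF c11 e0] unfolding A_def by blast
    moreover obtain d2 where "d2 > 0" "\<forall>u. dist u z0 < d2 \<longrightarrow> cmod (partial 1 (partial \<i> \<rho>) u - B) \<le> \<eta>"
      using ct[OF c1i e0] unfolding B_def by blast
    moreover obtain d3 where "d3 > 0" "\<forall>u. dist u z0 < d3 \<longrightarrow> cmod (partial \<i> (partial \<i> \<rho>) u - Cc) \<le> \<eta>"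
      using ct[OF cii e0] unfolding Cc_def by blast
    ultimately show ?thesis by (intro exI[of _ "min d1 (min d2 d3)"]) auto
  qed
  note cons = construct[OF hp1 hpi hp11 hp1i hpii, where ?z0.0=z0 and A=A and B=B and C=Cc,
      OF cont_ex _ assms(3) assms(4)]
  have QX: "Qf A B Cc z = of_real (Re z)^2/2*A + of_real (Re z)* of_real (Im z)*B + of_real (Im z)^2/2*Cc" for z
    by (simp add: Qf_def)
  have zs: "z = of_real (Re z) + \<i> * of_real (Im z)" for z by (simp add: complex_eq_iff)
  have zc: "cnj z = of_real (Re z) - \<i> * of_real (Im z)" for z by (simp add: complex_eq_iff)
  show ?thesis
  proof (cases "A + Cc = 0")
    case False
    have T: "z * cnj z = 2/(A+Cc) * Qf A B Cc z + 2/(A+Cc) * Qf A B Cc (\<i> * z)" for z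
    proof -
      have "Qf A B Cc (\<i> * z) = of_real (Im z)^2/2*A - of_real (Im z)* of_real (Re z)*B + of_real (Re z)^2/2*Cc"
        by (simp add: Qf_def)
      moreover have "z * cnj z = of_real (Re z)^2 + of_real (Im z)^2"
        by (simp add: complex_mult_cnj)
      ultimately show ?thesis unfolding QX using a1[OF False] by simp
    qed
    have "\<exists>(\<phi> :: complex \<Rightarrow> complex ^ 4) (\<psi> :: complex ^ 4 \<Rightarrow> complex). C_affine_1_4 \<phi> \<and> C_affine_4_1 \<psi> \<and> sup_lt K (\<lambda>z. (\<psi> \<circ> rho4 \<rho> \<circ> \<phi>) z - (\<lambda>z. z * cnj z) z) \<epsilon>"
      by (rule cons) (assumption, rule T)
    then show ?thesis by auto
  next
    case AC: True
    show ?thesis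
    proof (cases "A - \<i> * B = 0")
      case False
      have Cc: "Cc = -A" using AC by (simp add: eq_neg_iff_add_eq_0 add.commute)
      have T: "z ^ 2 = 2/(A - \<i>*B) * Qf A B Cc z + (-\<i>/(A - \<i>*B)) * Qf A B Cc ((1 + \<i>) * z)" for z
      proof -
        have "Qf A B Cc ((1 + \<i>) * z) = (of_real (Re z) - of_real (Im z))^2/2*A
            + (of_real (Re z) - of_real (Im z))*(of_real (Re z) + of_real (Im z))*B
            - (of_real (Re z) + of_real (Im z))^2/2*A"
          by (simp add: Qf_def Cc add.commute)
        moreover have "Qf A B Cc z = of_real (Re z)^2/2*A + of_real (Re z)* of_real (Im z)*B - of_real (Im z)^2/2*A"
          by (simp add: Qf_def Cc)
        ultimately show ?thesis using a2[OF False, of "of_real (Re z)" "of_real (Im z)"]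
          by (subst (1) zs) simp
      qed
      have "\<exists>(\<phi> :: complex \<Rightarrow> complex ^ 4) (\<psi> :: complex ^ 4 \<Rightarrow> complex). C_affine_1_4 \<phi> \<and> C_affine_4_1 \<psi> \<and> sup_lt K (\<lambda>z. (\<psi> \<circ> rho4 \<rho> \<circ> \<phi>) z - (\<lambda>z. z ^ 2) z) \<epsilon>"
      by (rule cons) (assumption, rule T)
    then show ?thesis by auto
    next
      case True
      have Cc: "Cc = -A" using AC by (simp add: eq_neg_iff_add_eq_0 add.commute)
      have B: "B = -\<i> * A" using True by (simp add: algebra_simps)
      have A0: "A \<noteq> 0" using nz B Cc unfolding A_def B_def Cc_def by auto
      have T: "(cnj z) ^ 2 = 2/A * Qf A B Cc z + 0 * Qf A B Cc (1 * z)" for z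
      proof -
        have "Qf A B Cc z = of_real (Re z)^2/2*A + of_real (Re z)* of_real (Im z)*(-\<i>*A) + of_real (Im z)^2/2*(-A)"
          unfolding Qf_def Cc B by simp
        then show ?thesis using a3[OF A0, of "of_real (Re z)" "of_real (Im z)"] zc[of z] by simp
      qed
      have "\<exists>(\<phi> :: complex \<Rightarrow> complex ^ 4) (\<psi> :: complex ^ 4 \<Rightarrow> complex). C_affine_1_4 \<phi> \<and> C_affine_4_1 \<psi> \<and> sup_lt K (\<lambda>z. (\<psi> \<circ> rho4 \<rho> \<circ> \<phi>) z - (\<lambda>z. (cnj z) ^ 2) z) \<epsilon>"
      by (rule cons) (assumption, rule T)
    then show ?thesis by auto
    qed
  qed
qed

end
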